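(* Let $\mathfrak S=(S,\xrightarrow{F},\le)$ be a complete functional WSTS. For any subset $A$ of $S$, $Post^*_{\mathfrak S}(cl(A))\subseteq cl(Post^*_{\mathfrak S}(A))$.
   Context: A complete functional WSTS: $(S,\le)$ is a well partial order which is a continuous dcpo, $F$ is a finite set of partial continuous maps $f:S\rightharpoonup S$ (domain Scott-open; $f(\bigvee D)=\bigvee f(D)$ for every directed $D\subseteq\operatorname{dom}f$), and $s\to s'$ iff $s'=f(s)$ for some $f\in F$. $Post^*_{\mathfrak S}(A)$ is the set of states reachable from elements of $A$ in zero or more steps. $cl$ denotes closure in the Scott topology (open sets: upward-closed $U$ meeting every directed set whose lub lies in $U$). *)

theory Defs
  imports Main
begin

text \<open>The state space S is the carrier type 'a, ordered by the class order (\<le>).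
  Partial maps S \<rightharpoonup> S are functions 'a \<Rightarrow> 'a option.\<close>

definition wpo :: "('a::order) itself \<Rightarrow> bool" where
  "wpo _ \<longleftrightarrow> (\<forall>g :: nat \<Rightarrow> 'a. \<exists>i j. i < j \<and> g i \<le> g j)"

definition directed :: "('a::order) set \<Rightarrow> bool" where
  "directed D \<longleftrightarrow> D \<noteq> {} \<and> (\<forall>x\<in>D. \<forall>y\<in>D. \<exists>z\<in>D. x \<le> z \<and> y \<le> z)"

definition is_lub :: "('a::order) set \<Rightarrow> 'a \<Rightarrow> bool" where
  "is_lub D x \<longleftrightarrow> (\<forall>d\<in>D. d \<le> x) \<and> (\<forall>u. (\<forall>d\<in>D. d \<le> u) \<longrightarrow> x \<le> u)"

definition dcpo :: "('a::order) itself \<Rightarrow> bool" where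
  "dcpo _ \<longleftrightarrow> (\<forall>D :: 'a set. directed D \<longrightarrow> (\<exists>x. is_lub D x))"

definition way_below :: "'a::order \<Rightarrow> 'a \<Rightarrow> bool" where
  "way_below x y \<longleftrightarrow>
     (\<forall>D z. directed D \<longrightarrow> is_lub D z \<longrightarrow> y \<le> z \<longrightarrow> (\<exists>d\<in>D. x \<le> d))"

definition continuous_dcpo :: "('a::order) itself \<Rightarrow> bool" where
  "continuous_dcpo T \<longleftrightarrow> dcpo T \<and>
     (\<forall>x :: 'a. directed {y. way_below y x} \<and> is_lub {y. way_below y x} x)"

definition scott_open :: "('a::order) set \<Rightarrow> bool" where
  "scott_open U \<longleftrightarrow> (\<forall>x\<in>U. \<forall>y. x \<le> y \<longrightarrow> y \<in> U) \<and>
     (\<forall>D x. directed D \<longrightarrow> is_lub D x \<longrightarrow> x \<in> U \<longrightarrow> D \<inter> U \<noteq> {})"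

definition scott_closed :: "('a::order) set \<Rightarrow> bool" where
  "scott_closed C \<longleftrightarrow> scott_open (- C)"

definition scott_cl :: "('a::order) set \<Rightarrow> 'a set" where
  "scott_cl A = \<Inter>{C. scott_closed C \<and> A \<subseteq> C}"

definition partial_continuous :: "('a::order \<Rightarrow> 'a option) \<Rightarrow> bool" where
  "partial_continuous f \<longleftrightarrow> scott_open (dom f) \<and>
     (\<forall>D x. directed D \<longrightarrow> D \<subseteq> dom f \<longrightarrow> is_lub D x \<longrightarrow>
        is_lub ((\<lambda>d. the (f d)) ` D) (the (f x)))"

definition complete_functional_wsts :: "('a::order \<Rightarrow> 'a option) set \<Rightarrow> bool" where
  "complete_functional_wsts F \<longleftrightarrow> wpo TYPE('a) \<and> continuous_dcpo TYPE('a) \<and>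
     finite F \<and> (\<forall>f\<in>F. partial_continuous f)"

definition step_rel :: "('a \<Rightarrow> 'a option) set \<Rightarrow> ('a \<times> 'a) set" where
  "step_rel F = {(s, s'). \<exists>f\<in>F. f s = Some s'}"

definition post_star :: "('a \<Rightarrow> 'a option) set \<Rightarrow> 'a set \<Rightarrow> 'a set" where
  "post_star F A = {s'. \<exists>s\<in>A. (s, s') \<in> (step_rel F)\<^sup>*}"

end

theory Submission
  imports Defs
begin

lemma open_Union:
  assumes H: "\<forall>U\<in>K. scott_open U" shows "scott_open (\<Union>K)"
  unfolding scott_open_def
proof (intro conjI ballI allI impI)
  fix x y assume "x \<in> \<Union>K" "x \<le> y"
  then obtain U where U: "U \<in> K" "x \<in> U" by blast
  have oU: "scott_open U" using H U(1) by (rule bspec)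
  have "\<forall>x\<in>U. \<forall>y. x \<le> y \<longrightarrow> y \<in> U" using oU unfolding scott_open_def by (rule conjunct1)
  then have "y \<in> U" using U(2) \<open>x \<le> y\<close> by blast
  then show "y \<in> \<Union>K" using U(1) by blast
next
  fix D x assume D: "directed D" "is_lub D x" "x \<in> \<Union>K"
  then obtain U where U: "U \<in> K" "x \<in> U" by blast
  have oU: "scott_open U" using H U(1) by (rule bspec)
  have "\<forall>D x. directed D \<longrightarrow> is_lub D x \<longrightarrow> x \<in> U \<longrightarrow> D \<inter> U \<noteq> {}"
    using oU unfolding scott_open_def by (rule conjunct2)
  then have "D \<inter> U \<noteq> {}" using D U(2) by blast
  then show "D \<inter> \<Union>K \<noteq> {}" using U(1) by blast
qed

lemma cl_closed: "scott_closed (scott_cl A)"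
proof -
  let ?K = "{C. scott_closed C \<and> A \<subseteq> C}"
  have eq: "- scott_cl A = \<Union>(uminus ` ?K)" unfolding scott_cl_def by blast
  have "\<forall>U\<in>uminus ` ?K. scott_open U" unfolding scott_closed_def by blast
  then have "scott_open (\<Union>(uminus ` ?K))" by (rule open_Union)
  then show ?thesis unfolding scott_closed_def eq .
qed

lemma cl_least: "scott_closed C \<Longrightarrow> A \<subseteq> C \<Longrightarrow> scott_cl A \<subseteq> C"
  unfolding scott_cl_def by (rule Inter_lower) simp

lemma cl_incl: "A \<subseteq> scott_cl A"
  unfolding scott_cl_def by (rule Inter_greatest) simp

lemma cl_mono: assumes "A \<subseteq> B" shows "scott_cl A \<subseteq> scott_cl B"
proof (rule cl_least[OF cl_closed])
  show "A \<subseteq> scott_cl B" using assms cl_incl[of B] by (rule subset_trans)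
qed

lemma pc_mono:
  assumes "partial_continuous f" "f x = Some a" "x \<le> y"
  shows "\<exists>b. f y = Some b \<and> a \<le> b"
proof -
  have o: "scott_open (dom f)" using assms(1) partial_continuous_def by blast
  have "\<forall>x\<in>dom f. \<forall>y. x \<le> y \<longrightarrow> y \<in> dom f" using o unfolding scott_open_def by (rule conjunct1)
  then have "y \<in> dom f" using assms(2,3) by blast
  then obtain b where b: "f y = Some b" by blast
  have "directed {x,y}" unfolding directed_def using assms(3) by auto
  moreover have "is_lub {x,y} y" unfolding is_lub_def using assms(3) by auto
  moreover have "{x,y} \<subseteq> dom f" using assms(2) b by auto
  moreover have "\<forall>D x. directed D \<longrightarrow> D \<subseteq> dom f \<longrightarrow> is_lub D x \<longrightarrow>
        is_lub ((\<lambda>d. the (f d)) ` D) (the (f x))" using assms(1) unfolding partial_continuous_def by (rule conjunct2)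
  ultimately have "is_lub ((\<lambda>d. the (f d)) ` {x,y}) (the (f y))" by blast
  then have "a \<le> b" using assms(2) b unfolding is_lub_def by auto
  with b show ?thesis by blast
qed

lemma key:
  assumes pc: "partial_continuous f" and C: "scott_closed C"
  shows "scott_closed {x. \<forall>a. f x = Some a \<longrightarrow> a \<in> C}"
proof -
  have oC: "scott_open (- C)" using C scott_closed_def by blast
  have o: "scott_open (dom f)" using pc partial_continuous_def by blast
  have eq: "- {x. \<forall>a. f x = Some a \<longrightarrow> a \<in> C} = {x. \<exists>a. f x = Some a \<and> a \<notin> C}" by auto
  show ?thesis unfolding scott_closed_def eq scott_open_def
  proof (intro conjI ballI allI impI)
    fix x y assume x: "x \<in> {x. \<exists>a. f x = Some a \<and> a \<notin> C}" and xy: "x \<le> y"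
    then obtain a where a: "f x = Some a" "a \<notin> C" by blast
    obtain b where b: "f y = Some b" "a \<le> b" using pc_mono[OF pc a(1) xy] by blast
    have "\<forall>x\<in>- C. \<forall>y. x \<le> y \<longrightarrow> y \<in> - C" using oC unfolding scott_open_def by (rule conjunct1)
    then have "b \<notin> C" using a(2) b(2) by blast
    with b show "y \<in> {x. \<exists>a. f x = Some a \<and> a \<notin> C}" by blast
  next
    fix D x assume D: "directed D" and lub: "is_lub D x" and x: "x \<in> {x. \<exists>a. f x = Some a \<and> a \<notin> C}"
    then obtain a where a: "f x = Some a" "a \<notin> C" by blast
    have "\<forall>D x. directed D \<longrightarrow> is_lub D x \<longrightarrow> x \<in> dom f \<longrightarrow> D \<inter> dom f \<noteq> {}" using o unfolding scott_open_def by (rule conjunct2)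
    then have "D \<inter> dom f \<noteq> {}" using D lub a(1) by blast
    then obtain d0 where d0: "d0 \<in> D" "d0 \<in> dom f" by blast
    let ?D = "D \<inter> dom f"
    have up: "\<And>u v. u \<in> dom f \<Longrightarrow> u \<le> v \<Longrightarrow> v \<in> dom f" using o unfolding scott_open_def by (meson conjunct1 bspec spec mp)
    have dD: "directed ?D" unfolding directed_def
    proof (intro conjI ballI)
      show "?D \<noteq> {}" using d0 by blast
    next
      fix u v assume "u \<in> ?D" "v \<in> ?D"
      then obtain z where "z \<in> D" "u \<le> z" "v \<le> z" using D unfolding directed_def by blast
      then show "\<exists>z\<in>?D. u \<le> z \<and> v \<le> z" using up \<open>u \<in> ?D\<close> by blast
    qed
    have lD: "is_lub ?D x" unfolding is_lub_def
    proof (intro conjI allI impI ballI)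
      fix d assume "d \<in> ?D" then show "d \<le> x" using lub unfolding is_lub_def by blast
    next
      fix u assume H: "\<forall>d\<in>?D. d \<le> u"
      have "\<forall>d\<in>D. d \<le> u"
      proof
        fix d assume "d \<in> D"
        then obtain z where "z \<in> D" "d \<le> z" "d0 \<le> z" using D d0 unfolding directed_def by blast
        then have "z \<in> ?D" using up d0 by blast
        then show "d \<le> u" using H \<open>d \<le> z\<close> by (meson order_trans)
      qed
      then show "x \<le> u" using lub unfolding is_lub_def by blast
    qed
    have "\<forall>D x. directed D \<longrightarrow> D \<subseteq> dom f \<longrightarrow> is_lub D x \<longrightarrow>
        is_lub ((\<lambda>d. the (f d)) ` D) (the (f x))" using pc unfolding partial_continuous_def by (rule conjunct2)
    then have "is_lub ((\<lambda>d. the (f d)) ` ?D) (the (f x))" using dD lD by blast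
    then have il: "is_lub ((\<lambda>d. the (f d)) ` ?D) a" using a(1) by simp
    have dI: "directed ((\<lambda>d. the (f d)) ` ?D)" unfolding directed_def
    proof (intro conjI ballI)
      show "(\<lambda>d. the (f d)) ` ?D \<noteq> {}" using d0 by blast
    next
      fix p q assume "p \<in> (\<lambda>d. the (f d)) ` ?D" "q \<in> (\<lambda>d. the (f d)) ` ?D"
      then obtain u v where uv: "u \<in> ?D" "v \<in> ?D" "p = the (f u)" "q = the (f v)" by blast
      then obtain z where z: "z \<in> ?D" "u \<le> z" "v \<le> z" using dD unfolding directed_def by blast
      from uv obtain pu where pu: "f u = Some pu" by blast
      from uv obtain qv where qv: "f v = Some qv" by blast
      obtain b1 where b1: "f z = Some b1" "pu \<le> b1" using pc_mono[OF pc pu z(2)] by blast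
      obtain b2 where b2: "f z = Some b2" "qv \<le> b2" using pc_mono[OF pc qv z(3)] by blast
      have "p \<le> the (f z)" "q \<le> the (f z)" using uv pu qv b1 b2 by auto
      then show "\<exists>r\<in>(\<lambda>d. the (f d)) ` ?D. p \<le> r \<and> q \<le> r" using z(1) by blast
    qed
    have "\<forall>D x. directed D \<longrightarrow> is_lub D x \<longrightarrow> x \<in> - C \<longrightarrow> D \<inter> - C \<noteq> {}" using oC unfolding scott_open_def by (rule conjunct2)
    then have "((\<lambda>d. the (f d)) ` ?D) \<inter> - C \<noteq> {}" using dI il a(2) by blast
    then obtain d where d: "d \<in> ?D" "the (f d) \<notin> C" by blast
    then have "d \<in> D \<inter> {x. \<exists>a. f x = Some a \<and> a \<notin> C}" by auto
    then show "D \<inter> {x. \<exists>a. f x = Some a \<and> a \<notin> C} \<noteq> {}" by blast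
  qed
qed

theorem lemma5p2:
  fixes F :: "('a::order \<Rightarrow> 'a option) set" and A :: "'a set"
  assumes "complete_functional_wsts F"
  shows "post_star F (scott_cl A) \<subseteq> scott_cl (post_star F A)"
proof -
  let ?B = "post_star F A"
  let ?C = "scott_cl ?B"
  have pcF: "\<And>f. f \<in> F \<Longrightarrow> partial_continuous f" using assms complete_functional_wsts_def by blast
  have stepB: "\<And>x y. x \<in> ?B \<Longrightarrow> (x,y) \<in> step_rel F \<Longrightarrow> y \<in> ?B"
    unfolding post_star_def by (auto intro: rtrancl_into_rtrancl)
  have stepC: "\<And>x y. x \<in> ?C \<Longrightarrow> (x,y) \<in> step_rel F \<Longrightarrow> y \<in> ?C"
  proof -
    fix x y assume x: "x \<in> ?C" and xy: "(x,y) \<in> step_rel F"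
    then obtain f where f: "f \<in> F" "f x = Some y" unfolding step_rel_def by blast
    have "?B \<subseteq> {x. \<forall>a. f x = Some a \<longrightarrow> a \<in> ?C}"
    proof (intro subsetI CollectI allI impI)
      fix b a assume "b \<in> ?B" "f b = Some a"
      then have "a \<in> ?B" using stepB f(1) unfolding step_rel_def by blast
      then show "a \<in> ?C" using cl_incl by blast
    qed
    then have "?C \<subseteq> {x. \<forall>a. f x = Some a \<longrightarrow> a \<in> ?C}"
      using cl_least[OF key[OF pcF[OF f(1)] cl_closed]] by blast
    then show "y \<in> ?C" using x f(2) by blast
  qed
  have AB: "A \<subseteq> ?B" unfolding post_star_def by blast
  have clA: "scott_cl A \<subseteq> ?C" using cl_mono[OF AB] .
  show ?thesis
  proof
    fix y assume "y \<in> post_star F (scott_cl A)"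
    then obtain x where x: "x \<in> scott_cl A" "(x,y) \<in> (step_rel F)\<^sup>*" unfolding post_star_def by blast
    from x(2) show "y \<in> ?C"
    proof (induction rule: rtrancl_induct)
      case base then show ?case using x(1) clA by blast
    next
      case (step y z) then show ?case using stepC by blast
    qed
  qed
qed

end
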